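(* Let $n\ge2$, let $a_1,\dots,a_{n+1}\in\mathbb P^n$ be general points, and let $R\subset\mathbb P^n$ be a hyperplane containing none of them. Let $B=\{\langle a_i,a_j\rangle\cap R : 1\le i<j\le n+1\}$, a set of $\binom{n+1}{2}$ points of $R\cong\mathbb P^{n-1}$. Then $B$ imposes independent conditions on quadrics of $R$; equivalently, no quadric hypersurface of $R$ contains $B$.
   Context: $\langle a_i,a_j\rangle$ denotes the line spanned by $a_i$ and $a_j$. *)

theory Defs
  imports "HOL-Analysis.Analysis"
begin

text \<open>Points of P^n are represented by nonzero vectors of complex^'n,
  where CARD('n) = n+1 (homogeneous coordinates).\<close>

inductive_set polyfun :: "(('v \<Rightarrow> complex) \<Rightarrow> complex) set" where
  pf_const: "(\<lambda>x. c) \<in> polyfun"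
| pf_var: "(\<lambda>x. x v) \<in> polyfun"
| pf_add: "p \<in> polyfun \<Longrightarrow> q \<in> polyfun \<Longrightarrow> (\<lambda>x. p x + q x) \<in> polyfun"
| pf_mult: "p \<in> polyfun \<Longrightarrow> q \<in> polyfun \<Longrightarrow> (\<lambda>x. p x * q x) \<in> polyfun"

text \<open>A property holds for general (n+1)-tuples of points of P^n if it holds on a
  nonempty Zariski-open set of tuples, i.e. outside the zero locus of some polynomial
  in the coordinates which does not vanish identically.\<close>
definition general_tuples :: "(('i \<Rightarrow> complex ^ 'n) \<Rightarrow> bool) \<Rightarrow> bool" where
  "general_tuples P \<longleftrightarrow>
     (\<exists>f \<in> polyfun. (\<exists>x. f x \<noteq> 0) \<and>
        (\<forall>a. f (\<lambda>(i, k). a i $ k) \<noteq> 0 \<longrightarrow> P a))"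

definition linform :: "complex ^ 'n \<Rightarrow> complex ^ 'n \<Rightarrow> complex" where
  "linform c x = (\<Sum>k\<in>UNIV. c $ k * x $ k)"

definition hyperplane :: "complex ^ 'n \<Rightarrow> (complex ^ 'n) set" where
  "hyperplane c = {x. linform c x = 0}"

definition pline :: "complex ^ 'n \<Rightarrow> complex ^ 'n \<Rightarrow> (complex ^ 'n) set" where
  "pline a b = {(\<chi> k. s * a $ k + t * b $ k) | s t. True}"

definition qform :: "('n \<Rightarrow> 'n \<Rightarrow> complex) \<Rightarrow> complex ^ 'n \<Rightarrow> complex" where
  "qform Q x = (\<Sum>k\<in>UNIV. \<Sum>l\<in>UNIV. Q k l * x $ k * x $ l)"

end

theory Submission
  imports Defs
begin

lemma polyfun_sum: "finite S \<Longrightarrow> (\<And>s. s \<in> S \<Longrightarrow> f s \<in> polyfun) \<Longrightarrow> (\<lambda>x. \<Sum>s\<in>S. f s x) \<in> polyfun"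
proof (induction S rule: finite_induct)
  case empty then show ?case using pf_const[of 0] by simp
next
  case (insert a F)
  then show ?case using pf_add[of "f a" "\<lambda>x. \<Sum>s\<in>F. f s x"] by simp
qed

lemma polyfun_prod: "finite S \<Longrightarrow> (\<And>s. s \<in> S \<Longrightarrow> f s \<in> polyfun) \<Longrightarrow> (\<lambda>x. \<Prod>s\<in>S. f s x) \<in> polyfun"
proof (induction S rule: finite_induct)
  case empty then show ?case using pf_const[of 1] by simp
next
  case (insert a F)
  then show ?case using pf_mult[of "f a" "\<lambda>x. \<Prod>s\<in>F. f s x"] by simp
qed

lemma det_polyfun: "(\<lambda>X. det (\<chi> i k. X (i,k) :: complex^'n::finite^'n)) \<in> polyfun"
proof -
  have "(\<lambda>X. \<Sum>p\<in>{p. p permutes (UNIV::'n set)}. of_int (sign p) * (\<Prod>i\<in>UNIV. X (i, p i))) \<in> polyfun"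
    apply (rule polyfun_sum)
     apply (simp add: finite_permutations)
    apply (rule pf_mult[OF pf_const])
    apply (rule polyfun_prod, simp)
    apply (rule pf_var)
    done
  then show ?thesis by (simp add: det_def)
qed

lemma qform_expand:
  fixes Q :: "'n::finite \<Rightarrow> 'n \<Rightarrow> complex" and u :: "'m::finite \<Rightarrow> complex"
  shows "(\<Sum>k\<in>UNIV. \<Sum>l\<in>UNIV. Q k l * (\<Sum>i\<in>UNIV. u i * al i k) * (\<Sum>j\<in>UNIV. u j * al j l))
     = (\<Sum>i\<in>UNIV. \<Sum>j\<in>UNIV. u i * u j * (\<Sum>k\<in>UNIV. \<Sum>l\<in>UNIV. Q k l * al i k * al j l))"
proof -
    let ?F = "\<lambda>k l i j. Q k l * (u i * al i k) * (u j * al j l)"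
    have "(\<Sum>k\<in>UNIV. \<Sum>l\<in>UNIV. \<Sum>i\<in>UNIV. \<Sum>j\<in>UNIV. ?F k l i j)
        = (\<Sum>k\<in>UNIV. \<Sum>i\<in>UNIV. \<Sum>l\<in>UNIV. \<Sum>j\<in>UNIV. ?F k l i j)"
      by (rule sum.cong[OF refl], rule sum.swap)
    also have "\<dots> = (\<Sum>i\<in>UNIV. \<Sum>k\<in>UNIV. \<Sum>l\<in>UNIV. \<Sum>j\<in>UNIV. ?F k l i j)"
      by (rule sum.swap)
    also have "\<dots> = (\<Sum>i\<in>UNIV. \<Sum>k\<in>UNIV. \<Sum>j\<in>UNIV. \<Sum>l\<in>UNIV. ?F k l i j)"
      by (rule sum.cong[OF refl], rule sum.cong[OF refl], rule sum.swap)
    also have "\<dots> = (\<Sum>i\<in>UNIV. \<Sum>j\<in>UNIV. \<Sum>k\<in>UNIV. \<Sum>l\<in>UNIV. ?F k l i j)"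
      by (rule sum.cong[OF refl], rule sum.swap)
    finally have swap: "(\<Sum>k\<in>UNIV. \<Sum>l\<in>UNIV. \<Sum>i\<in>UNIV. \<Sum>j\<in>UNIV. ?F k l i j) = (\<Sum>i\<in>UNIV. \<Sum>j\<in>UNIV. \<Sum>k\<in>UNIV. \<Sum>l\<in>UNIV. ?F k l i j)" .
  show ?thesis using swap by (simp add: sum_distrib_left sum_distrib_right mult_ac)
qed

lemma final_sum:
  fixes u :: "'m::finite \<Rightarrow> complex"
  assumes su: "(\<Sum>i\<in>UNIV. u i) = 0"
    and sym: "\<And>i j. \<beta> i j + \<beta> j i = \<beta> i i + \<beta> j j"
  shows "(\<Sum>i\<in>UNIV. \<Sum>j\<in>UNIV. u i * u j * \<beta> i j) = 0"
proof -
  let ?S = "(\<Sum>i\<in>UNIV. \<Sum>j\<in>UNIV. u i * u j * \<beta> i j)"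
  have sw: "?S = (\<Sum>i\<in>UNIV. \<Sum>j\<in>UNIV. u i * u j * \<beta> j i)"
    by (subst sum.swap) (simp add: mult_ac)
  have "2 * ?S = (\<Sum>i\<in>UNIV. \<Sum>j\<in>UNIV. u i * u j * (\<beta> i j + \<beta> j i))"
    by (subst mult_2, subst (2) sw) (simp add: sum.distrib[symmetric] algebra_simps)
  also have "\<dots> = (\<Sum>i\<in>UNIV. \<Sum>j\<in>UNIV. u i * u j * (\<beta> i i + \<beta> j j))"
    using sym by simp
  also have "\<dots> = (\<Sum>i\<in>UNIV. \<Sum>j\<in>UNIV. u i * u j * \<beta> i i) + (\<Sum>i\<in>UNIV. \<Sum>j\<in>UNIV. u i * u j * \<beta> j j)"
    by (simp add: sum.distrib algebra_simps)
  also have "(\<Sum>i\<in>UNIV. \<Sum>j\<in>UNIV. u i * u j * \<beta> i i) = (\<Sum>i\<in>UNIV. (\<Sum>j\<in>UNIV. u j) * (u i * \<beta> i i))"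
    by (rule sum.cong[OF refl], simp only: sum_distrib_right, rule sum.cong[OF refl], simp add: mult_ac)
  also have "(\<Sum>i\<in>UNIV. \<Sum>j\<in>UNIV. u i * u j * \<beta> j j) = (\<Sum>i\<in>UNIV. u i) * (\<Sum>j\<in>UNIV. u j * \<beta> j j)"
    by (simp only: sum_product) (simp add: mult_ac)
  also have "(\<Sum>i\<in>UNIV. (\<Sum>j\<in>UNIV. u j) * (u i * \<beta> i i)) + (\<Sum>i\<in>UNIV. u i) * (\<Sum>j\<in>UNIV. u j * \<beta> j j) = 0"
    using su by simp
  finally show ?thesis by simp
qed

lemma pair_expand:
  fixes Q :: "'n::finite \<Rightarrow> 'n \<Rightarrow> complex"
  shows "(\<Sum>k\<in>UNIV. \<Sum>l\<in>UNIV. Q k l * (A k - B k) * (A l - B l))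
    = (\<Sum>k\<in>UNIV. \<Sum>l\<in>UNIV. Q k l * A k * A l) - (\<Sum>k\<in>UNIV. \<Sum>l\<in>UNIV. Q k l * A k * B l)
      - (\<Sum>k\<in>UNIV. \<Sum>l\<in>UNIV. Q k l * B k * A l) + (\<Sum>k\<in>UNIV. \<Sum>l\<in>UNIV. Q k l * B k * B l)"
  by (simp add: algebra_simps sum_subtractf sum.distrib)

theorem lemma2:
  assumes "CARD('n::finite) \<ge> 3"
  shows "general_tuples (\<lambda>a :: 'n \<Rightarrow> complex ^ 'n.
           \<forall>c :: complex ^ 'n. c \<noteq> 0 \<longrightarrow> (\<forall>i. a i \<notin> hyperplane c) \<longrightarrow>
             \<not> (\<exists>Q. (\<exists>x \<in> hyperplane c. qform Q x \<noteq> 0) \<and>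
                   (\<forall>i j. i \<noteq> j \<longrightarrow>
                      (\<forall>p \<in> pline (a i) (a j) \<inter> hyperplane c. qform Q p = 0))))"
proof -
  let ?f = "\<lambda>X. det (\<chi> i k. X (i,k) :: complex^'n^'n)"
  have nz: "?f (\<lambda>(i,k). if i = k then 1 else 0) \<noteq> 0"
  proof -
    have "(\<chi> i k. (\<lambda>(i,k). if i = k then 1 else 0) (i,k) :: complex^'n^'n) = mat 1"
      by (simp add: mat_def)
    then show ?thesis by simp
  qed
  have ex: "\<exists>X. ?f X \<noteq> 0" using nz by blast
  show ?thesis
    unfolding general_tuples_def
  proof (rule bexI[OF _ det_polyfun], rule conjI[OF ex], intro allI impI notI)
    fix a :: "'n \<Rightarrow> complex^'n" and c :: "complex^'n"
    assume dnz: "?f (\<lambda>(i, k). a i $ k) \<noteq> 0" and "c \<noteq> 0"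
      and notin: "\<forall>i. a i \<notin> hyperplane c"
    assume "\<exists>Q. (\<exists>x\<in>hyperplane c. qform Q x \<noteq> 0) \<and>
        (\<forall>i j. i \<noteq> j \<longrightarrow> (\<forall>p\<in>pline (a i) (a j) \<inter> hyperplane c. qform Q p = 0))"
    then obtain Q x where xh: "x \<in> hyperplane c" and qx: "qform Q x \<noteq> 0"
      and H: "\<And>i j p. i \<noteq> j \<Longrightarrow> p \<in> pline (a i) (a j) \<Longrightarrow> p \<in> hyperplane c \<Longrightarrow> qform Q p = 0"
      by blast
    define M where "M = (\<chi> i k. a i $ k :: complex^'n^'n)"
    define \<gamma> where "\<gamma> i = linform c (a i)" for i
    have gnz: "\<gamma> i \<noteq> 0" for i using notin unfolding \<gamma>_def hyperplane_def by auto
    have "det (transpose M) \<noteq> 0" using dnz unfolding M_def by simp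
    then have "invertible (transpose M)" by (simp add: invertible_det_nz)
    then obtain B where B: "transpose M ** B = mat 1" by (auto simp: invertible_right_inverse)
    define t where "t = B *v x"
    have "transpose M *v t = x" unfolding t_def by (simp add: matrix_vector_mul_assoc B)
    then have xk0: "x $ k = (\<Sum>i\<in>UNIV. a i $ k * t $ i)" for k
      by (auto simp: matrix_vector_mult_def transpose_def M_def vec_eq_iff)
    define u where "u i = t $ i * \<gamma> i" for i
    define al where "al i k = a i $ k / \<gamma> i" for i k
    define \<beta> where "\<beta> i j = (\<Sum>k\<in>UNIV. \<Sum>l\<in>UNIV. Q k l * al i k * al j l)" for i j
    have xk: "x $ k = (\<Sum>i\<in>UNIV. u i * al i k)" for k
      unfolding xk0 u_def al_def using gnz by (intro sum.cong) (auto simp: field_simps)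
    have qxe: "qform Q x = (\<Sum>i\<in>UNIV. \<Sum>j\<in>UNIV. u i * u j * \<beta> i j)"
      unfolding qform_def xk \<beta>_def by (rule qform_expand)
    have lal: "(\<Sum>k\<in>UNIV. c $ k * al i k) = 1" for i
    proof -
      have "(\<Sum>k\<in>UNIV. c $ k * al i k) = \<gamma> i / \<gamma> i"
        by (simp only: al_def times_divide_eq_right sum_divide_distrib[symmetric] \<gamma>_def linform_def)
      then show ?thesis using gnz by simp
    qed
    have su: "(\<Sum>i\<in>UNIV. u i) = 0"
    proof -
      have "0 = (\<Sum>k\<in>UNIV. c $ k * (\<Sum>i\<in>UNIV. u i * al i k))"
        using xh unfolding hyperplane_def linform_def by (simp add: xk)
      also have "\<dots> = (\<Sum>k\<in>UNIV. \<Sum>i\<in>UNIV. u i * (c $ k * al i k))"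
        by (simp add: sum_distrib_left mult_ac)
      also have "\<dots> = (\<Sum>i\<in>UNIV. u i * (\<Sum>k\<in>UNIV. c $ k * al i k))"
        by (subst sum.swap) (simp add: sum_distrib_left)
      also have "\<dots> = (\<Sum>i\<in>UNIV. u i)" using lal by simp
      finally show ?thesis by simp
    qed
    have sym: "\<beta> i j + \<beta> j i = \<beta> i i + \<beta> j j" for i j
    proof (cases "i = j")
      case True then show ?thesis by simp
    next
      case False
      define p where "p = (\<chi> k. (1 / \<gamma> i) * a i $ k + (- 1 / \<gamma> j) * a j $ k :: complex^'n)"
      have pk: "p $ k = al i k - al j k" for k
        unfolding p_def al_def by (simp add: field_simps)
      have "p \<in> pline (a i) (a j)" unfolding pline_def p_def by blast
      moreover have "p \<in> hyperplane c"
        using lal[of i] lal[of j] unfolding hyperplane_def linform_def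
        by (simp add: pk right_diff_distrib sum_subtractf)
      ultimately have "qform Q p = 0" using H False by blast
      then have "\<beta> i i - \<beta> i j - \<beta> j i + \<beta> j j = 0"
        unfolding qform_def pk \<beta>_def pair_expand .
      then show ?thesis by (simp add: algebra_simps)
    qed
    have "qform Q x = 0" unfolding qxe using su sym by (rule final_sum)
    with qx show False by simp
  qed
qed

end
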